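(* Let $\mu$ be a stationary ergodic, elliptic (and non-degenerate) probability measure on $\Omega$. If $\mathbb P^1(S_+)>0$, then $\mathbb P^1(S_-)=0$.
   Context: Notation: $\mathbb N=\{1,2,\dots\}$, $\mathbb Z_+=\{0,1,2,\dots\}$. Cookie environments $\omega\in\Omega=[0,1]^{\mathbb Z\times\mathbb N}$; shift $(\theta\omega)(x,n)=\omega(x+1,n)$; $\mu$ stationary ergodic means $\theta$-invariant and ergodic; elliptic means $\mu((0,1)^{\mathbb Z\times\mathbb N})=1$. Random arrow environment: $a(x,n)=\mathbf 1_{\{u(x,n)<\omega(x,n)\}}$ with $u(x,n)$ i.i.d. Uniform$[0,1]$ independent of $\omega\sim\mu$; $\mathbb P$ denotes the joint law of $(\omega,u)$. A sequence $b\in\{0,1\}^{\mathbb N}$ is non-degenerate if $b(i)\ne b(i+1)$ for infinitely many $i$; $\mu$ is non-degenerate if $\mathbb P$-a.s. every $a(x,\cdot)$ is non-degenerate (this is needed for the processes below to be well defined). For non-degenerate $b$: $U^+_b(0)=0$ and for $x\ge1$, $U^+_b(x)$ is the number of indices $i$ with $b(i)=1$ preceding the $x$-th index $j$ with $b(j)=0$; $U^-_b$ is defined the same way with $0$ and $1$ exchanged. For $y\in\mathbb Z_+$: $Z^+_0=y$, $Z^+_n=U^+_{a(n-1,\cdot)}(Z^+_{n-1})$; $Z^-_0=y$, $Z^-_n=U^-_{a(1-n,\cdot)}(Z^-_{n-1})$. $\mathbb P^y$ denotes $\mathbb P$ applied to events about $Z^\pm$ with initial value $y$. $S_+=\{Z^+_n>0\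 \forall n\ge0\}$, $S_-=\{Z^-_n>0\ \forall n\ge0\}$. *)

theory Defs
  imports "HOL-Probability.Probability" "HOL-Library.Infinite_Set"
begin

definition Idx :: "(int \<times> nat) set" where
  "Idx = UNIV \<times> {1..}"

definition OmegaM :: "(int \<times> nat \<Rightarrow> real) measure" where
  "OmegaM = (\<Pi>\<^sub>M i\<in>Idx. restrict_space borel {0..1::real})"

definition UnifM :: "(int \<times> nat \<Rightarrow> real) measure" where
  "UnifM = (\<Pi>\<^sub>M i\<in>Idx. uniform_measure lborel {0..1::real})"

definition shift :: "(int \<times> nat \<Rightarrow> real) \<Rightarrow> (int \<times> nat \<Rightarrow> real)" where
  "shift \<omega> = (\<lambda>(x, n). \<omega> (x + 1, n))"

definition stationary :: "(int \<times> nat \<Rightarrow> real) measure \<Rightarrow> bool" where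
  "stationary \<mu> \<longleftrightarrow> shift \<in> measurable \<mu> \<mu> \<and> distr \<mu> \<mu> shift = \<mu>"

definition ergodic :: "(int \<times> nat \<Rightarrow> real) measure \<Rightarrow> bool" where
  "ergodic \<mu> \<longleftrightarrow> (\<forall>A\<in>sets \<mu>. shift -` A \<inter> space \<mu> = A \<longrightarrow>
                      measure \<mu> A = 0 \<or> measure \<mu> A = 1)"

definition elliptic :: "(int \<times> nat \<Rightarrow> real) measure \<Rightarrow> bool" where
  "elliptic \<mu> \<longleftrightarrow> emeasure \<mu> {\<omega> \<in> space \<mu>. \<forall>x. \<forall>n\<ge>1. 0 < \<omega> (x, n) \<and> \<omega> (x, n) < 1} = 1"

definition jointP :: "(int \<times> nat \<Rightarrow> real) measure \<Rightarrow> ((int \<times> nat \<Rightarrow> real) \<times> (int \<times> nat \<Rightarrow> real)) measure" where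
  "jointP \<mu> = \<mu> \<Otimes>\<^sub>M UnifM"

text \<open>Arrow environment a(x,.) as a sequence indexed by N (True = 1, False = 0):
  a(x,i) = 1 iff u(x,i) < omega(x,i).\<close>
definition arrow :: "(int \<times> nat \<Rightarrow> real) \<times> (int \<times> nat \<Rightarrow> real) \<Rightarrow> int \<Rightarrow> nat \<Rightarrow> bool" where
  "arrow p x = (\<lambda>i. snd p (x, i) < fst p (x, i))"

definition nondeg_seq :: "(nat \<Rightarrow> bool) \<Rightarrow> bool" where
  "nondeg_seq b \<longleftrightarrow> infinite {i. 1 \<le> i \<and> b i \<noteq> b (Suc i)}"

definition nondeg :: "(int \<times> nat \<Rightarrow> real) measure \<Rightarrow> bool" where
  "nondeg \<mu> \<longleftrightarrow> (AE p in jointP \<mu>. \<forall>x. nondeg_seq (arrow p x))"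

text \<open>U^+_b(0) = 0; for x >= 1, U^+_b(x) = number of i >= 1 with b(i) = 1 preceding
  the x-th index j >= 1 with b(j) = 0 (enumerate is 0-based).\<close>
definition Uplus :: "(nat \<Rightarrow> bool) \<Rightarrow> nat \<Rightarrow> nat" where
  "Uplus b x = (if x = 0 then 0
     else card {i. 1 \<le> i \<and> i < enumerate {j. 1 \<le> j \<and> \<not> b j} (x - 1) \<and> b i})"

definition Uminus :: "(nat \<Rightarrow> bool) \<Rightarrow> nat \<Rightarrow> nat" where
  "Uminus b x = Uplus (\<lambda>i. \<not> b i) x"

primrec Zplus :: "(int \<times> nat \<Rightarrow> real) \<times> (int \<times> nat \<Rightarrow> real) \<Rightarrow> nat \<Rightarrow> nat \<Rightarrow> nat" where
  "Zplus p y 0 = y"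
| "Zplus p y (Suc n) = Uplus (arrow p (int n)) (Zplus p y n)"

primrec Zminus :: "(int \<times> nat \<Rightarrow> real) \<times> (int \<times> nat \<Rightarrow> real) \<Rightarrow> nat \<Rightarrow> nat \<Rightarrow> nat" where
  "Zminus p y 0 = y"
| "Zminus p y (Suc n) = Uminus (arrow p (- int n)) (Zminus p y n)"

definition Splus :: "(int \<times> nat \<Rightarrow> real) measure \<Rightarrow> nat \<Rightarrow> ((int \<times> nat \<Rightarrow> real) \<times> (int \<times> nat \<Rightarrow> real)) set" where
  "Splus \<mu> y = {p \<in> space (jointP \<mu>). \<forall>n. Zplus p y n > 0}"

definition Sminus :: "(int \<times> nat \<Rightarrow> real) measure \<Rightarrow> nat \<Rightarrow> ((int \<times> nat \<Rightarrow> real) \<times> (int \<times> nat \<Rightarrow> real)) set" where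
  "Sminus \<mu> y = {p \<in> space (jointP \<mu>). \<forall>n. Zminus p y n > 0}"

end

theory Submission
  imports Defs
begin

lemma enum_card_lt:
  fixes S :: "nat set"
  assumes S: "infinite S"
  shows "k < card {j\<in>S. j < m} \<longleftrightarrow> enumerate S k < m"
proof
  assume h: "k < card {j\<in>S. j < m}"
  show "enumerate S k < m"
  proof (rule ccontr)
    assume "\<not> enumerate S k < m"
    then have "{j\<in>S. j < m} \<subseteq> enumerate S ` {..<k}"
    proof -
      { fix j assume j: "j \<in> S" "j < m"
        obtain i where i: "enumerate S i = j" using enumerate_Ex[OF S j(1)] by blast
        have "i < k"
        proof (rule ccontr)
          assume "\<not> i < k"
          then have "enumerate S k \<le> enumerate S i" using S by (simp add: not_less)
          then show False using j i \<open>\<not> enumerate S k < m\<close> by simp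
        qed
        then have "j \<in> enumerate S ` {..<k}" using i by blast }
      then show ?thesis by blast
    qed
    then have "card {j\<in>S. j < m} \<le> card (enumerate S ` {..<k})" by (intro card_mono) auto
    also have "\<dots> \<le> k" using card_image_le[of "{..<k}" "enumerate S"] by simp
    finally show False using h by simp
  qed
next
  assume h: "enumerate S k < m"
  have "enumerate S ` {..k} \<subseteq> {j\<in>S. j < m}"
  proof
    fix j assume "j \<in> enumerate S ` {..k}"
    then obtain i where i: "i \<le> k" "j = enumerate S i" by auto
    have le: "enumerate S i \<le> enumerate S k" using i S by simp
    have "enumerate S i < m" using le h by linarith
    then show "j \<in> {j\<in>S. j < m}" using i S by (auto intro: enumerate_in_set)
  qed
  then have "card (enumerate S ` {..k}) \<le> card {j\<in>S. j < m}" by (intro card_mono) auto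
  moreover have "card (enumerate S ` {..k}) = Suc k"
    using S by (subst card_image) (auto intro!: inj_onI simp: strict_mono_eq[OF strict_mono_enumerate[OF S]])
  ultimately show "k < card {j\<in>S. j < m}" by simp
qed

lemma nondeg_infinite:
  assumes "nondeg_seq b"
  shows "infinite {j. 1 \<le> j \<and> b j}" and "infinite {j. 1 \<le> j \<and> \<not> b j}"
proof -
  have sw: "infinite {i. 1 \<le> i \<and> b i \<noteq> b (Suc i)}" using assms by (simp add: nondeg_seq_def)
  have "\<And>N v. \<exists>j\<ge>N. 1 \<le> j \<and> b j = v"
  proof -
    fix N v
    obtain i where i: "N \<le> i" "1 \<le> i" "b i \<noteq> b (Suc i)"
      using sw unfolding infinite_nat_iff_unbounded_le by blast
    show "\<exists>j\<ge>N. 1 \<le> j \<and> b j = v"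
    proof (cases "b i = v")
      case True then show ?thesis using i by blast
    next
      case False then show ?thesis using i by (intro exI[of _ "Suc i"]) auto
    qed
  qed
  then show "infinite {j. 1 \<le> j \<and> b j}" and "infinite {j. 1 \<le> j \<and> \<not> b j}"
    unfolding infinite_nat_iff_unbounded_le by (metis (mono_tags) mem_Collect_eq)+
qed

lemma column_lemma:
  assumes nd: "nondeg_seq b" and z: "1 \<le> z" and w: "1 \<le> w"
  shows "w \<le> Uplus b z \<longleftrightarrow> Uminus b w < z"
proof -
  define Os where "Os = {j. 1 \<le> j \<and> b j}"
  define Zs where "Zs = {j. 1 \<le> j \<and> \<not> b j}"
  have iO: "infinite Os" and iZ: "infinite Zs" using nondeg_infinite[OF nd] Os_def Zs_def by auto
  define p where "p = enumerate Zs (z - 1)"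
  define q where "q = enumerate Os (w - 1)"
  have pZ: "p \<in> Zs" using enumerate_in_set[OF iZ] p_def by simp
  have qO: "q \<in> Os" using enumerate_in_set[OF iO] q_def by simp
  have pq: "p \<noteq> q" using pZ qO Os_def Zs_def by auto
  have U1: "Uplus b z = card {j\<in>Os. j < p}"
    using z unfolding Uplus_def p_def Zs_def Os_def by (auto intro!: arg_cong[where f=card])
  have U2: "Uminus b w = card {j\<in>Zs. j < q}"
    using w unfolding Uminus_def Uplus_def q_def Zs_def Os_def by (auto intro!: arg_cong[where f=card])
  have "w \<le> Uplus b z \<longleftrightarrow> w - 1 < card {j\<in>Os. j < p}" using w U1 by auto
  also have "\<dots> \<longleftrightarrow> q < p" using enum_card_lt[OF iO] q_def by simp
  also have "\<dots> \<longleftrightarrow> \<not> p < q" using pq by auto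
  also have "p < q \<longleftrightarrow> z - 1 < card {j\<in>Zs. j < q}" using enum_card_lt[OF iZ] p_def by simp
  also have "\<dots> \<longleftrightarrow> z \<le> Uminus b w" using z U2 by auto
  finally show ?thesis by auto
qed

primrec ZR :: "(int \<Rightarrow> nat \<Rightarrow> bool) \<Rightarrow> int \<Rightarrow> nat \<Rightarrow> nat \<Rightarrow> nat" where
  "ZR A x y 0 = y"
| "ZR A x y (Suc n) = Uplus (A (x + int n)) (ZR A x y n)"

primrec ZL :: "(int \<Rightarrow> nat \<Rightarrow> bool) \<Rightarrow> int \<Rightarrow> nat \<Rightarrow> nat \<Rightarrow> nat" where
  "ZL A x y 0 = y"
| "ZL A x y (Suc n) = Uminus (A (x - int n)) (ZL A x y n)"

lemma Zplus_ZR: "Zplus p y n = ZR (arrow p) 0 y n"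
  by (induction n) auto

lemma Zminus_ZL: "Zminus p y n = ZL (arrow p) 0 y n"
  by (induction n) auto

lemma no_R_left_of_L:
  assumes nd: "\<And>c. nondeg_seq (A c)" and xy: "x \<le> y"
    and R: "\<And>k. 0 < ZR A x 1 k" and L: "\<And>k. 0 < ZL A y 1 k"
  shows False
proof -
  define n where "n = nat (y - x)"
  have yx: "y = x + int n" using xy n_def by simp
  have key: "ZR A x 1 (Suc k) < ZL A y 1 (n - k)" if "k \<le> n" for k
    using that
  proof (induction k)
    case 0
    have c: "y - int n = x" using yx by simp
    have "ZL A y 1 n \<le> Uplus (A x) 1 \<longleftrightarrow> Uminus (A x) (ZL A y 1 n) < 1"
      using column_lemma[OF nd, of 1 "ZL A y 1 n"] L[of n] by simp
    moreover have "0 < Uminus (A x) (ZL A y 1 n)" using L[of "Suc n"] c by simp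
    ultimately show ?case by simp
  next
    case (Suc k)
    then have IH: "ZR A x 1 (Suc k) < ZL A y 1 (n - k)" by simp
    define c where "c = x + int (Suc k)"
    have c2: "y - int (n - Suc k) = c" using yx Suc.prems c_def by simp
    have nk: "n - k = Suc (n - Suc k)" using Suc.prems by simp
    have "ZL A y 1 (n - Suc k) \<le> Uplus (A c) (ZR A x 1 (Suc k))
          \<longleftrightarrow> Uminus (A c) (ZL A y 1 (n - Suc k)) < ZR A x 1 (Suc k)"
      using column_lemma[OF nd, of "ZR A x 1 (Suc k)" "ZL A y 1 (n - Suc k)"]
        R[of "Suc k"] L[of "n - Suc k"] by simp
    moreover have "Uminus (A c) (ZL A y 1 (n - Suc k)) = ZL A y 1 (n - k)"
      using nk c2 by simp
    ultimately show ?case using IH c_def by (simp add: not_less)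
  qed
  from key[of n] R[of "Suc n"] show False by simp
qed

lemma meas_enum:
  fixes F :: "'a \<Rightarrow> nat set"
  assumes "\<And>j. {a\<in>space N. j \<in> F a} \<in> sets N"
  shows "(\<lambda>a. enumerate (F a) k) \<in> measurable N (count_space UNIV)"
  using assms
proof (induction k arbitrary: F)
  case 0
  note h = this
  have p: "(\<lambda>a. j \<in> F a) \<in> measurable N (count_space UNIV)" for j unfolding Measurable.pred_def by (rule h)
  have "(\<lambda>a. LEAST n. n \<in> F a) \<in> measurable N (count_space UNIV)"
    by (rule measurable_Least[of "\<lambda>i a. i \<in> F a", OF p])
  then show ?case by (simp add: enumerate_0)
next
  case (Suc k)
  have p: "(\<lambda>a. j \<in> F a) \<in> measurable N (count_space UNIV)" for j unfolding Measurable.pred_def by (rule Suc.prems)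
  have L: "(\<lambda>a. LEAST n. n \<in> F a) \<in> measurable N (count_space UNIV)"
    by (rule measurable_Least[of "\<lambda>i a. i \<in> F a", OF p])
  have "\<And>j. {a\<in>space N. j \<in> F a - {LEAST n. n \<in> F a}} \<in> sets N"
  proof -
    fix j
    have "{a\<in>space N. j \<in> F a - {LEAST n. n \<in> F a}} =
      {a\<in>space N. j \<in> F a} \<inter> ((\<lambda>a. LEAST n. n \<in> F a) -` (UNIV - {j}) \<inter> space N)" by auto
    also have "\<dots> \<in> sets N" using Suc.prems measurable_sets[OF L, of "UNIV - {j}"] by auto
    finally show "{a\<in>space N. j \<in> F a - {LEAST n. n \<in> F a}} \<in> sets N" .
  qed
  from Suc.IH[OF this] show ?case by (simp add: enumerate_Suc)
qed

lemma meas_card_lt: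
  fixes b :: "'a \<Rightarrow> nat \<Rightarrow> bool" and m :: nat
  assumes "\<And>i. {a\<in>space N. b a i} \<in> sets N"
  shows "(\<lambda>a. card {i. 1 \<le> i \<and> i < m \<and> b a i}) \<in> measurable N (count_space UNIV)"
proof (induction m)
  case 0
  then show ?case by simp
next
  case (Suc m)
  have eq: "card {i. 1 \<le> i \<and> i < Suc m \<and> b a i} =
    (if 1 \<le> m \<and> b a m then Suc (card {i. 1 \<le> i \<and> i < m \<and> b a i}) else card {i. 1 \<le> i \<and> i < m \<and> b a i})" for a
  proof -
    have fin: "finite {i. 1 \<le> i \<and> i < m \<and> b a i}" by (rule finite_subset[of _ "{..<m}"]) auto
    show ?thesis
    proof (cases "1 \<le> m \<and> b a m")
      case True
      then have "{i. 1 \<le> i \<and> i < Suc m \<and> b a i} = insert m {i. 1 \<le> i \<and> i < m \<and> b a i}" by auto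
      then show ?thesis using True fin by simp
    next
      case False
      then have "{i. 1 \<le> i \<and> i < Suc m \<and> b a i} = {i. 1 \<le> i \<and> i < m \<and> b a i}" by (auto simp: less_Suc_eq)
      then show ?thesis using False by simp
    qed
  qed
  have p: "{a\<in>space N. 1 \<le> m \<and> b a m} \<in> sets N"
    using assms[of m] by (cases "1 \<le> m") simp_all
  have s: "(\<lambda>a. Suc (card {i. 1 \<le> i \<and> i < m \<and> b a i})) \<in> measurable N (count_space UNIV)"
    by (rule measurable_compose[OF Suc.IH measurable_count_space])
  have "(\<lambda>a. if 1 \<le> m \<and> b a m then Suc (card {i. 1 \<le> i \<and> i < m \<and> b a i}) else card {i. 1 \<le> i \<and> i < m \<and> b a i})
     \<in> measurable N (count_space UNIV)"
    by (rule measurable_If[OF s Suc.IH p])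
  then show ?case by (simp only: eq)
qed

lemma meas_Uplus:
  assumes "\<And>i. {a\<in>space N. b a i} \<in> sets N"
  shows "(\<lambda>a. Uplus (b a) z) \<in> measurable N (count_space UNIV)"
proof (cases "z = 0")
  case True
  then show ?thesis by (simp add: Uplus_def)
next
  case False
  have g: "(\<lambda>a. enumerate {j. 1 \<le> j \<and> \<not> b a j} (z - 1)) \<in> measurable N (count_space UNIV)"
  proof (rule meas_enum)
    fix j
    have "{a \<in> space N. j \<in> {j. 1 \<le> j \<and> \<not> b a j}} = (if 1 \<le> j then space N - {a\<in>space N. b a j} else {})"
      by auto
    then show "{a \<in> space N. j \<in> {j. 1 \<le> j \<and> \<not> b a j}} \<in> sets N" using assms[of j] by auto
  qed
  have c: "\<And>m. (\<lambda>a. card {i. 1 \<le> i \<and> i < m \<and> b a i}) \<in> measurable N (count_space UNIV)"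
    by (rule meas_card_lt[OF assms])
  have "(\<lambda>a. card {i. 1 \<le> i \<and> i < enumerate {j. 1 \<le> j \<and> \<not> b a j} (z - 1) \<and> b a i})
        \<in> measurable N (count_space UNIV)"
    by (rule measurable_compose_countable[where f="\<lambda>m a. card {i. 1 \<le> i \<and> i < m \<and> b a i}"
      and g="\<lambda>a. enumerate {j. 1 \<le> j \<and> \<not> b a j} (z - 1)", OF c g])
  moreover have "(\<lambda>a. Uplus (b a) z) = (\<lambda>a. card {i. 1 \<le> i \<and> i < enumerate {j. 1 \<le> j \<and> \<not> b a j} (z - 1) \<and> b a i})"
    using False unfolding Uplus_def by (intro ext) (simp only: if_False)
  ultimately show ?thesis by (simp only:)
qed

lemma meas_Uminus:
  assumes "\<And>i. {a\<in>space N. b a i} \<in> sets N"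
  shows "(\<lambda>a. Uminus (b a) z) \<in> measurable N (count_space UNIV)"
  unfolding Uminus_def
proof (rule meas_Uplus)
  fix i
  have "{a \<in> space N. \<not> b a i} = space N - {a\<in>space N. b a i}" by auto
  then show "{a \<in> space N. \<not> b a i} \<in> sets N" using assms[of i] by auto
qed

lemma meas_ZR:
  assumes "\<And>c i. c0 \<le> c \<Longrightarrow> {a\<in>space N. \<alpha> a c i} \<in> sets N" and "c0 \<le> x"
  shows "(\<lambda>a. ZR (\<alpha> a) x y k) \<in> measurable N (count_space UNIV)"
proof (induction k)
  case 0 then show ?case by simp
next
  case (Suc k)
  have f: "\<And>m. (\<lambda>a. Uplus (\<alpha> a (x + int k)) m) \<in> measurable N (count_space UNIV)"
    by (rule meas_Uplus) (use assms in simp)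
  show ?case using measurable_compose_countable[OF f Suc.IH] by simp
qed

lemma meas_ZL:
  assumes "\<And>c i. c \<le> c0 \<Longrightarrow> {a\<in>space N. \<alpha> a c i} \<in> sets N" and "x \<le> c0"
  shows "(\<lambda>a. ZL (\<alpha> a) x y k) \<in> measurable N (count_space UNIV)"
proof (induction k)
  case 0 then show ?case by simp
next
  case (Suc k)
  have f: "\<And>m. (\<lambda>a. Uminus (\<alpha> a (x - int k)) m) \<in> measurable N (count_space UNIV)"
    by (rule meas_Uminus) (use assms in simp)
  show ?case using measurable_compose_countable[OF f Suc.IH] by simp
qed

definition Rev :: "(int \<Rightarrow> nat \<Rightarrow> bool) \<Rightarrow> int \<Rightarrow> bool" where
  "Rev A x \<longleftrightarrow> (\<forall>k. 0 < ZR A x 1 k)"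

definition Lev :: "(int \<Rightarrow> nat \<Rightarrow> bool) \<Rightarrow> int \<Rightarrow> bool" where
  "Lev A x \<longleftrightarrow> (\<forall>k. 0 < ZL A x 1 k)"

lemma sets_Rev:
  assumes "\<And>c i. c0 \<le> c \<Longrightarrow> {a\<in>space N. \<alpha> a c i} \<in> sets N" and "c0 \<le> x"
  shows "{a\<in>space N. Rev (\<alpha> a) x} \<in> sets N"
proof -
  have "{a\<in>space N. Rev (\<alpha> a) x} = (\<Inter>k. (\<lambda>a. ZR (\<alpha> a) x 1 k) -` (UNIV - {0}) \<inter> space N)"
    by (auto simp: Rev_def)
  also have "\<dots> \<in> sets N"
    using measurable_sets[OF meas_ZR[OF assms]] by (intro sets.countable_INT) auto
  finally show ?thesis .
qed

lemma sets_Lev: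
  assumes "\<And>c i. c \<le> c0 \<Longrightarrow> {a\<in>space N. \<alpha> a c i} \<in> sets N" and "x \<le> c0"
  shows "{a\<in>space N. Lev (\<alpha> a) x} \<in> sets N"
proof -
  have "{a\<in>space N. Lev (\<alpha> a) x} = (\<Inter>k. (\<lambda>a. ZL (\<alpha> a) x 1 k) -` (UNIV - {0}) \<inter> space N)"
    by (auto simp: Lev_def)
  also have "\<dots> \<in> sets N"
    using measurable_sets[OF meas_ZL[OF assms]] by (intro sets.countable_INT) auto
  finally show ?thesis .
qed

abbreviation UM :: "real measure" where "UM \<equiv> uniform_measure lborel {0..1::real}"

lemma prob_UM: "prob_space UM"
  by (rule prob_space_uniform_measure) auto

lemma prob_UnifM: "prob_space UnifM"
  unfolding UnifM_def by (rule prob_space_PiM) (rule prob_UM)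

lemma space_UnifM: "space UnifM = Pi\<^sub>E Idx (\<lambda>_. UNIV)"
  unfolding UnifM_def by (simp add: space_PiM)

lemma space_OmegaM: "space OmegaM = Pi\<^sub>E Idx (\<lambda>_. {0..1})"
  unfolding OmegaM_def by (simp add: space_PiM)

lemma Idx_iff: "(c, i) \<in> Idx \<longleftrightarrow> 1 \<le> i"
  by (simp add: Idx_def)

definition shiftIdx :: "int \<times> nat \<Rightarrow> int \<times> nat" where
  "shiftIdx = (\<lambda>(x, n). (x + 1, n))"

lemma shift_restrict:
  assumes "u \<in> Pi\<^sub>E Idx S"
  shows "Defs.shift u = (\<lambda>n\<in>Idx. u (shiftIdx n))"
proof
  fix k :: "int \<times> nat"
  obtain x n where k: "k = (x, n)" by (cases k)
  show "Defs.shift u k = (\<lambda>n\<in>Idx. u (shiftIdx n)) k"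
  proof (cases "1 \<le> n")
    case True then show ?thesis by (simp add: k shift_def shiftIdx_def Idx_iff)
  next
    case False
    then have a: "(x + 1, n) \<notin> Idx" and b: "(x, n) \<notin> Idx" by (auto simp: Idx_iff)
    have "u (x + 1, n) = undefined" by (rule PiE_arb[OF assms a])
    then show ?thesis using b by (simp add: k shift_def shiftIdx_def)
  qed
qed

lemma distr_UnifM_shift: "distr UnifM UnifM Defs.shift = UnifM"
proof -
  have inj: "inj_on shiftIdx Idx" by (auto simp: inj_on_def shiftIdx_def)
  have fI: "shiftIdx \<in> Idx \<rightarrow> Idx" by (auto simp: shiftIdx_def Idx_def)
  have "distr (Pi\<^sub>M Idx (\<lambda>_. UM)) (\<Pi>\<^sub>M i\<in>Idx. (\<lambda>_. UM) (shiftIdx i)) (\<lambda>\<omega>. \<lambda>n\<in>Idx. \<omega> (shiftIdx n))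
      = (\<Pi>\<^sub>M i\<in>Idx. (\<lambda>_. UM) (shiftIdx i))"
    by (rule distr_PiM_reindex[OF prob_UM inj fI])
  then have "distr UnifM UnifM (\<lambda>\<omega>. \<lambda>n\<in>Idx. \<omega> (shiftIdx n)) = UnifM"
    unfolding UnifM_def by simp
  moreover have "distr UnifM UnifM Defs.shift = distr UnifM UnifM (\<lambda>\<omega>. \<lambda>n\<in>Idx. \<omega> (shiftIdx n))"
    by (rule distr_cong) (auto simp: space_UnifM intro: shift_restrict)
  ultimately show ?thesis by simp
qed

lemma meas_UnifM_shift: "Defs.shift \<in> measurable UnifM UnifM"
proof -
  have "(\<lambda>\<omega>. \<lambda>n\<in>Idx. \<omega> (shiftIdx n)) \<in> measurable UnifM UnifM"
    unfolding UnifM_def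
    by (rule measurable_restrict) (auto simp: shiftIdx_def Idx_def intro!: measurable_component_singleton)
  then show ?thesis
    by (rule measurable_cong[THEN iffD1, rotated]) (auto simp: space_UnifM intro: shift_restrict[symmetric])
qed


lemma ZR_shift: "ZR (\<lambda>c. A (c + 1)) x y k = ZR A (x + 1) y k"
  by (induction k) (simp_all add: algebra_simps)

lemma ZL_shift: "ZL (\<lambda>c. A (c + 1)) x y k = ZL A (x + 1) y k"
  by (induction k) (simp_all add: algebra_simps)

lemma Rev_shift: "Rev (\<lambda>c. A (c + 1)) x = Rev A (x + 1)"
  by (simp add: Rev_def ZR_shift)

lemma Lev_shift: "Lev (\<lambda>c. A (c + 1)) x = Lev A (x + 1)"
  by (simp add: Lev_def ZL_shift)

locale setting =
  fixes \<mu> :: "(int \<times> nat \<Rightarrow> real) measure"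
  assumes P: "prob_space \<mu>" and S: "sets \<mu> = sets OmegaM" and st: "stationary \<mu>"
begin

abbreviation "J \<equiv> jointP \<mu>"

definition T :: "(int \<times> nat \<Rightarrow> real) \<times> (int \<times> nat \<Rightarrow> real) \<Rightarrow> (int \<times> nat \<Rightarrow> real) \<times> (int \<times> nat \<Rightarrow> real)" where
  "T = (\<lambda>(x, y). (Defs.shift x, Defs.shift y))"

lemma space_mu: "space \<mu> = Pi\<^sub>E Idx (\<lambda>_. {0..1})"
  using sets_eq_imp_space_eq[OF S] space_OmegaM by simp

lemma space_J: "space J = space \<mu> \<times> space UnifM"
  by (simp add: jointP_def space_pair_measure)

lemma prob_J: "prob_space J"
  unfolding jointP_def by (rule prob_space_pair[OF P prob_UnifM])

lemma shift_meas: "Defs.shift \<in> measurable \<mu> \<mu>" and shift_distr: "distr \<mu> \<mu> Defs.shift = \<mu>"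
  using st by (auto simp: stationary_def)

lemma T_alt: "T = (\<lambda>p. (Defs.shift (fst p), Defs.shift (snd p)))"
  by (auto simp: T_def)

lemma T_meas: "T \<in> measurable J J"
  unfolding T_alt jointP_def
  by (rule measurable_Pair[OF measurable_compose[OF measurable_fst shift_meas]
        measurable_compose[OF measurable_snd meas_UnifM_shift]])

lemma distr_T: "distr J J T = J"
proof -
  interpret U: prob_space UnifM by (rule prob_UnifM)
  have "distr \<mu> \<mu> Defs.shift \<Otimes>\<^sub>M distr UnifM UnifM Defs.shift = distr (\<mu> \<Otimes>\<^sub>M UnifM) (\<mu> \<Otimes>\<^sub>M UnifM) (\<lambda>(x, y). (Defs.shift x, Defs.shift y))"
    by (rule pair_measure_distr[OF shift_meas meas_UnifM_shift]) (simp add: distr_UnifM_shift U.sigma_finite_measure_axioms)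
  then show ?thesis unfolding jointP_def T_def shift_distr distr_UnifM_shift by simp
qed

lemma arrow_T: "arrow (T p) c = arrow p (c + 1)"
  unfolding T_def by (cases p) (simp add: arrow_def shift_def)

lemma coord_fst: "1 \<le> i \<Longrightarrow> (\<lambda>p. fst p (c, i)) \<in> borel_measurable J"
proof -
  assume i: "1 \<le> i"
  have "(\<lambda>\<omega>. \<omega> (c, i)) \<in> measurable OmegaM (restrict_space borel {0..1::real})"
    unfolding OmegaM_def by (rule measurable_component_singleton) (use i in \<open>simp add: Idx_iff\<close>)
  then have "(\<lambda>\<omega>. \<omega> (c, i)) \<in> measurable OmegaM borel"
    using measurable_compose[OF _ measurable_restrict_space1[OF measurable_ident]] by (simp add: id_def)
  then have "(\<lambda>\<omega>. \<omega> (c, i)) \<in> borel_measurable \<mu>"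
    by (subst measurable_cong_sets[OF S refl])
  then have "(\<lambda>p. (\<lambda>\<omega>. \<omega> (c, i)) (fst p)) \<in> borel_measurable (\<mu> \<Otimes>\<^sub>M UnifM)"
    by (rule measurable_compose[OF measurable_fst])
  then show ?thesis unfolding jointP_def by simp
qed

lemma coord_snd: "1 \<le> i \<Longrightarrow> (\<lambda>p. snd p (c, i)) \<in> borel_measurable J"
proof -
  assume i: "1 \<le> i"
  have "(\<lambda>\<omega>. \<omega> (c, i)) \<in> measurable UnifM UM"
    unfolding UnifM_def by (rule measurable_component_singleton) (use i in \<open>simp add: Idx_iff\<close>)
  then have "(\<lambda>\<omega>. \<omega> (c, i)) \<in> borel_measurable UnifM"
    using measurable_cong_sets[of UnifM UnifM UM borel] by simp
  then show ?thesis unfolding jointP_def by measurable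
qed

lemma arrow_0: "p \<in> space J \<Longrightarrow> \<not> arrow p c 0"
proof -
  assume "p \<in> space J"
  then have a: "fst p \<in> Pi\<^sub>E Idx (\<lambda>_. {0..1})" and b: "snd p \<in> Pi\<^sub>E Idx (\<lambda>_. UNIV)"
    by (auto simp: space_J space_mu space_UnifM)
  have "(c, 0) \<notin> Idx" by (simp add: Idx_iff)
  then show ?thesis using PiE_arb[OF a] PiE_arb[OF b] by (simp add: arrow_def)
qed

lemma sets_arrow: "{p\<in>space J. arrow p c i} \<in> sets J"
proof (cases "1 \<le> i")
  case True
  then show ?thesis unfolding arrow_def
    by (intro borel_measurable_less coord_fst coord_snd)
next
  case False
  then have "i = 0" by simp
  then have e: "{p\<in>space J. arrow p c i} = {}" using arrow_0 by auto
  show ?thesis by (subst e) simp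
qed

end

context setting
begin

definition Rset :: "int \<Rightarrow> _" where "Rset x = {p\<in>space J. Rev (arrow p) x}"
definition Lset :: "int \<Rightarrow> _" where "Lset x = {p\<in>space J. Lev (arrow p) x}"
definition IR where "IR = {p\<in>space J. \<forall>m::nat. \<exists>n\<ge>m. Rev (arrow p) (int n)}"
definition E :: "nat \<Rightarrow> _" where "E m = {p\<in>space J. \<exists>n\<ge>m. Lev (arrow p) (int n)}"

lemma sets_Rset: "Rset x \<in> sets J"
  unfolding Rset_def by (rule sets_Rev[of x]) (auto intro: sets_arrow)

lemma sets_Lset: "Lset x \<in> sets J"
  unfolding Lset_def by (rule sets_Lev[of x]) (auto intro: sets_arrow)

lemma IR_eq: "IR = (\<Inter>m. \<Union>n\<in>{m..}. Rset (int n))"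
  unfolding IR_def Rset_def using sets.sets_into_space by auto

lemma E_eq: "E m = (\<Union>n\<in>{m..}. Lset (int n))"
  unfolding E_def Lset_def by auto

lemma sets_IR: "IR \<in> sets J"
  unfolding IR_eq using sets_Rset by blast

lemma sets_E: "E m \<in> sets J"
  unfolding E_eq using sets_Lset by blast

lemma T_space: "p \<in> space J \<Longrightarrow> T p \<in> space J"
  using measurable_space[OF T_meas] by blast

lemma arrow_T': "arrow (T p) = (\<lambda>c. arrow p (c + 1))"
  by (rule ext) (rule arrow_T)

lemma Rev_T: "Rev (arrow (T p)) x = Rev (arrow p) (x + 1)"
  unfolding arrow_T' by (rule Rev_shift)

lemma Lev_T: "Lev (arrow (T p)) x = Lev (arrow p) (x + 1)"
  unfolding arrow_T' by (rule Lev_shift)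

lemma T_Rset: "T -` Rset x \<inter> space J = Rset (x + 1)"
  unfolding Rset_def using T_space Rev_T by auto

lemma T_IR: "T -` IR \<inter> space J = IR"
proof -
  have "(\<forall>m::nat. \<exists>n\<ge>m. Rev (arrow p) (int n + 1)) \<longleftrightarrow> (\<forall>m::nat. \<exists>n\<ge>m. Rev (arrow p) (int n))" for p
  proof
    assume h: "\<forall>m::nat. \<exists>n\<ge>m. Rev (arrow p) (int n + 1)"
    show "\<forall>m::nat. \<exists>n\<ge>m. Rev (arrow p) (int n)"
    proof
      fix m
      obtain n where "n \<ge> m" "Rev (arrow p) (int n + 1)" using h by blast
      then show "\<exists>n\<ge>m. Rev (arrow p) (int n)" by (intro exI[of _ "Suc n"]) (auto simp: add.commute)
    qed
  next
    assume h: "\<forall>m::nat. \<exists>n\<ge>m. Rev (arrow p) (int n)"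
    show "\<forall>m::nat. \<exists>n\<ge>m. Rev (arrow p) (int n + 1)"
    proof
      fix m
      obtain n where n: "n \<ge> Suc m" "Rev (arrow p) (int n)" using h by blast
      then have "Rev (arrow p) (int (n - 1) + 1)" by (simp add: of_nat_diff)
      then show "\<exists>n\<ge>m. Rev (arrow p) (int n + 1)" using n by (intro exI[of _ "n - 1"]) auto
    qed
  qed
  then show ?thesis unfolding IR_def using T_space Rev_T by auto
qed

lemma T_E: "T -` E m \<inter> space J = E (Suc m)"
proof -
  have "(\<exists>n\<ge>m. Lev (arrow p) (int n + 1)) \<longleftrightarrow> (\<exists>n\<ge>Suc m. Lev (arrow p) (int n))" for p
  proof
    assume "\<exists>n\<ge>m. Lev (arrow p) (int n + 1)"
    then obtain n where "n \<ge> m" "Lev (arrow p) (int n + 1)" by blast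
    then show "\<exists>n\<ge>Suc m. Lev (arrow p) (int n)" by (intro exI[of _ "Suc n"]) (auto simp: add.commute)
  next
    assume "\<exists>n\<ge>Suc m. Lev (arrow p) (int n)"
    then obtain n where n: "n \<ge> Suc m" "Lev (arrow p) (int n)" by blast
    then have "Lev (arrow p) (int (n - 1) + 1)" by (simp add: of_nat_diff)
    then show "\<exists>n\<ge>m. Lev (arrow p) (int n + 1)" using n by (intro exI[of _ "n - 1"]) auto
  qed
  then show ?thesis unfolding E_def using T_space Lev_T by auto
qed

lemma measure_T: "A \<in> sets J \<Longrightarrow> measure J (T -` A \<inter> space J) = measure J A"
  using measure_distr[OF T_meas, of A] distr_T by simp

lemma measure_Rset: "measure J (Rset (int n)) = measure J (Rset 0)"
proof (induction n)
  case 0 then show ?case by simp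
next
  case (Suc n)
  have "measure J (Rset (int (Suc n))) = measure J (T -` Rset (int n) \<inter> space J)"
    using T_Rset[of "int n"] by (simp add: add.commute)
  also have "\<dots> = measure J (Rset (int n))" by (rule measure_T[OF sets_Rset])
  finally show ?case using Suc by simp
qed

lemma measure_E: "measure J (E n) = measure J (E 0)"
proof (induction n)
  case 0 then show ?case by simp
next
  case (Suc n)
  have "measure J (E (Suc n)) = measure J (T -` E n \<inter> space J)"
    using T_E[of n] by simp
  also have "\<dots> = measure J (E n)" by (rule measure_T[OF sets_E])
  finally show ?case using Suc by simp
qed

lemma IR_ge: "measure J (Rset 0) \<le> measure J IR"
proof -
  interpret PJ: prob_space J by (rule prob_J)
  define B where "B m = (\<Union>n\<in>{m..}. Rset (int n))" for m
  have Bs: "B m \<in> sets J" for m unfolding B_def using sets_Rset by blast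
  have dec: "decseq B" unfolding B_def decseq_def by (auto intro: order_trans)
  have lim: "(\<lambda>m. measure J (B m)) \<longlonglongrightarrow> measure J (\<Inter>m. B m)"
    by (rule Lim_measure_decseq) (use Bs dec in auto)
  have "measure J (Rset 0) \<le> measure J (B m)" for m
  proof -
    have "measure J (Rset 0) = measure J (Rset (int m))" by (simp add: measure_Rset)
    also have "\<dots> \<le> measure J (B m)"
      by (rule PJ.finite_measure_mono) (auto simp: B_def sets_Rset Bs intro: Bs)
    finally show ?thesis .
  qed
  then have "measure J (Rset 0) \<le> measure J (\<Inter>m. B m)"
    by (intro LIMSEQ_le_const[OF lim]) auto
  then show ?thesis unfolding IR_eq B_def .
qed

lemma E_AE: "AE p in J. \<forall>m. p \<in> E 0 \<longrightarrow> p \<in> E m"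
proof -
  interpret PJ: prob_space J by (rule prob_J)
  have "AE p in J. p \<in> E 0 \<longrightarrow> p \<in> E m" for m
  proof -
    have sub: "E m \<subseteq> E 0" unfolding E_def by auto
    have "measure J (E 0 - E m) = 0"
      using PJ.finite_measure_Diff[OF sets_E sets_E sub] measure_E[of m] by simp
    then have "emeasure J (E 0 - E m) = 0"
      using PJ.emeasure_eq_measure by simp
    moreover have eq: "{p\<in>space J. \<not> (p \<in> E 0 \<longrightarrow> p \<in> E m)} = E 0 - E m"
      by (auto simp: E_def)
    ultimately show ?thesis
      using AE_iff_measurable[OF sets.Diff[OF sets_E sets_E] eq] by simp
  qed
  then show ?thesis by (rule AE_all_countable[THEN iffD2, rule_format])
qed

end

definition Kc :: "nat \<Rightarrow> (int \<times> nat) set" where "Kc k = {int k} \<times> {1..}"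

definition Ac :: "nat \<Rightarrow> (int \<times> nat \<Rightarrow> real) set set" where
  "Ac k = sigma_sets (space UnifM)
     {(\<lambda>u. restrict u (Kc k)) -` S \<inter> space UnifM | S. S \<in> sets (Pi\<^sub>M (Kc k) (\<lambda>_. UM))}"

lemma indep_coords: "prob_space.indep_vars UnifM (\<lambda>_. UM) (\<lambda>i u. u i) Idx"
proof -
  interpret U: prob_space UnifM by (rule prob_UnifM)
  have rv: "(\<lambda>u. u i) \<in> measurable UnifM UM" for i :: "int \<times> nat"
  proof (cases "i \<in> Idx")
    case True
    then show ?thesis unfolding UnifM_def by (rule measurable_component_singleton)
  next
    case False
    have "(\<lambda>u. undefined) \<in> measurable UnifM UM" by simp
    then show ?thesis
      by (rule measurable_cong[THEN iffD1, rotated])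
         (auto simp: space_UnifM intro: PiE_arb[OF _ False, symmetric])
  qed
  have ne: "Idx \<noteq> {}" by (auto simp: Idx_def)
  have "distr UnifM (\<Pi>\<^sub>M i\<in>Idx. UM) (\<lambda>x. \<lambda>i\<in>Idx. x i) = distr UnifM UnifM (\<lambda>x. x)"
    by (rule distr_cong) (auto simp: UnifM_def space_PiM intro: restrict_PiE)
  also have "\<dots> = UnifM" by (rule distr_id)
  also have "\<dots> = (\<Pi>\<^sub>M i\<in>Idx. distr UnifM UM (\<lambda>u. u i))"
    unfolding UnifM_def
    by (rule PiM_cong[OF refl]) (rule distr_PiM_component[symmetric, OF prob_UM], simp)
  finally show ?thesis
    using U.indep_vars_iff_distr_eq_PiM[OF ne rv] by simp
qed

lemma indep_Ac: "prob_space.indep_sets UnifM Ac UNIV"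
proof -
  interpret U: prob_space UnifM by (rule prob_UnifM)
  have d: "disjoint_family_on Kc UNIV" by (auto simp: disjoint_family_on_def Kc_def)
  have K: "Kc k \<subseteq> Idx" for k by (auto simp: Kc_def Idx_def)
  have "U.indep_vars (\<lambda>j. Pi\<^sub>M (Kc j) (\<lambda>_. UM)) (\<lambda>j u. restrict (\<lambda>i. u i) (Kc j)) UNIV"
    by (rule U.indep_vars_restrict[OF indep_coords K d])
  then show ?thesis unfolding U.indep_vars_def Ac_def by simp
qed

lemma sigalg_Ac: "sigma_algebra (space UnifM) (Ac k)"
  unfolding Ac_def by (rule sigma_algebra_sigma_sets) auto

context setting
begin

lemma sec_tail:
  assumes om: "\<omega> \<in> space \<mu>"
  shows "Pair \<omega> -` IR \<in> prob_space.tail_events UnifM Ac"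
proof -
  interpret U: prob_space UnifM by (rule prob_UnifM)
  show ?thesis unfolding U.tail_events_def
  proof
    fix n :: nat
    define G where "G = \<Union> (Ac ` {n..})"
    have GP: "G \<subseteq> Pow (space UnifM)"
      unfolding G_def Ac_def by (auto dest: sigma_sets_into_sp[rotated])
    define N where "N = sigma (space UnifM) G"
    have sN: "sets N = sigma_sets (space UnifM) G" unfolding N_def using GP by (rule sets_measure_of)
    have spN: "space N = space UnifM" unfolding N_def using GP by (rule space_measure_of)
    have coord: "{u\<in>space N. arrow (\<omega>, u) c i} \<in> sets N" if c: "int n \<le> c" for c i
    proof (cases "1 \<le> i")
      case False
      then have i: "i = 0" by simp
      have a: "\<omega> \<in> Pi\<^sub>E Idx (\<lambda>_. {0..1})" using om space_mu by simp
      have ci: "(c, 0) \<notin> Idx" by (simp add: Idx_iff)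
      have e: "{u\<in>space N. arrow (\<omega>, u) c i} = {}"
      proof -
        { fix u assume "u \<in> space N"
          then have b: "u \<in> Pi\<^sub>E Idx (\<lambda>_. UNIV)" using spN space_UnifM by simp
          have "\<not> arrow (\<omega>, u) c i" using PiE_arb[OF a ci] PiE_arb[OF b ci] i by (simp add: arrow_def) }
        then show ?thesis by auto
      qed
      show ?thesis by (subst e) simp
    next
      case True
      obtain k where k: "c = int k" using c by (metis nonneg_int_cases order_trans of_nat_0_le_iff)
      have kn: "n \<le> k" using c k by simp
      have ciK: "(c, i) \<in> Kc k" using True k by (simp add: Kc_def)
      define S where "S = {v \<in> space (Pi\<^sub>M (Kc k) (\<lambda>_. UM)). v (c, i) < \<omega> (c, i)}"
      have "(\<lambda>v. v (c, i)) \<in> measurable (Pi\<^sub>M (Kc k) (\<lambda>_. UM)) UM"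
        by (rule measurable_component_singleton[OF ciK])
      then have m: "(\<lambda>v. v (c, i)) \<in> borel_measurable (Pi\<^sub>M (Kc k) (\<lambda>_. UM))"
        using measurable_cong_sets[of "Pi\<^sub>M (Kc k) (\<lambda>_. UM)" "Pi\<^sub>M (Kc k) (\<lambda>_. UM)" UM borel] by simp
      have Ss: "S \<in> sets (Pi\<^sub>M (Kc k) (\<lambda>_. UM))"
        unfolding S_def by (rule borel_measurable_less[OF m borel_measurable_const])
      have eq: "{u\<in>space N. arrow (\<omega>, u) c i} = (\<lambda>u. restrict u (Kc k)) -` S \<inter> space UnifM"
        using ciK by (auto simp: spN S_def arrow_def space_PiM space_UnifM)
      have "(\<lambda>u. restrict u (Kc k)) -` S \<inter> space UnifM \<in> Ac k"
        unfolding Ac_def using Ss by (intro sigma_sets.Basic) blast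
      then have "(\<lambda>u. restrict u (Kc k)) -` S \<inter> space UnifM \<in> G"
        unfolding G_def using kn by blast
      then show ?thesis unfolding eq sN by (rule sigma_sets.Basic)
    qed
    have R: "{u\<in>space N. Rev (arrow (\<omega>, u)) (int m)} \<in> sets N" if "n \<le> m" for m
      by (rule sets_Rev[of "int n"]) (use coord that in auto)
    have eq: "Pair \<omega> -` IR = (\<Inter>m. \<Union>m'\<in>{max m n..}. {u\<in>space N. Rev (arrow (\<omega>, u)) (int m')})"
    proof (rule set_eqI)
      fix u
      have P: "(\<forall>m::nat. \<exists>n'\<ge>m. P n') \<longleftrightarrow> (\<forall>m. \<exists>n'\<ge>max m n. P n')" for P :: "nat \<Rightarrow> bool"
        by (metis max.cobounded1 max.cobounded2 order_trans)
      have 1: "u \<in> Pair \<omega> -` IR \<longleftrightarrow> u \<in> space UnifM \<and> (\<forall>m::nat. \<exists>n'\<ge>m. Rev (arrow (\<omega>, u)) (int n'))"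
        using om by (auto simp: IR_def space_J)
      have 2: "u \<in> (\<Inter>m. \<Union>m'\<in>{max m n..}. {u\<in>space N. Rev (arrow (\<omega>, u)) (int m')})
          \<longleftrightarrow> u \<in> space UnifM \<and> (\<forall>m. \<exists>n'\<ge>max m n. Rev (arrow (\<omega>, u)) (int n'))"
        unfolding spN atLeast_iff INT_iff UN_iff mem_Collect_eq by blast
      show "u \<in> Pair \<omega> -` IR \<longleftrightarrow> u \<in> (\<Inter>m. \<Union>m'\<in>{max m n..}. {u\<in>space N. Rev (arrow (\<omega>, u)) (int m')})"
        unfolding 1 2 P[of "\<lambda>n'. Rev (arrow (\<omega>, u)) (int n')"] ..
    qed
    have "Pair \<omega> -` IR \<in> sets N" unfolding eq using R by auto
    then show "Pair \<omega> -` IR \<in> sigma_sets (space UnifM) (\<Union> (Ac ` {n..}))"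
      using sN G_def by simp
  qed
qed

end

context setting
begin

lemma IR_one:
  assumes erg: "ergodic \<mu>" and pos: "measure J (Rset 0) > 0"
  shows "measure J IR = 1"
proof -
  interpret U: prob_space UnifM by (rule prob_UnifM)
  interpret PJ: prob_space J by (rule prob_J)
  interpret M: prob_space \<mu> by (rule P)
  define h where "h \<omega> = emeasure UnifM (Pair \<omega> -` IR)" for \<omega>
  have IRs: "IR \<in> sets (\<mu> \<Otimes>\<^sub>M UnifM)" using sets_IR unfolding jointP_def .
  have h01: "h \<omega> = 0 \<or> h \<omega> = 1" if om: "\<omega> \<in> space \<mu>" for \<omega>
  proof -
    have "measure UnifM (Pair \<omega> -` IR) = 0 \<or> measure UnifM (Pair \<omega> -` IR) = 1"
      by (rule U.kolmogorov_0_1_law[OF sigalg_Ac indep_Ac sec_tail[OF om]])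
    then show ?thesis unfolding h_def U.emeasure_eq_measure by auto
  qed
  have hinv: "h (Defs.shift \<omega>) = h \<omega>" if om: "\<omega> \<in> space \<mu>" for \<omega>
  proof -
    have om2: "Defs.shift \<omega> \<in> space \<mu>" using measurable_space[OF shift_meas om] .
    define B where "B = Pair (Defs.shift \<omega>) -` IR"
    have Bs: "B \<in> sets UnifM" unfolding B_def by (rule sets_Pair1[OF IRs])
    have "Pair \<omega> -` IR = Defs.shift -` B \<inter> space UnifM"
    proof (rule set_eqI)
      fix u
      have "u \<in> Pair \<omega> -` IR \<longleftrightarrow> (\<omega>, u) \<in> T -` IR \<inter> space J" using T_IR by simp
      also have "\<dots> \<longleftrightarrow> u \<in> Defs.shift -` B \<inter> space UnifM"
        using om by (auto simp: T_def B_def space_J)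
      finally show "u \<in> Pair \<omega> -` IR \<longleftrightarrow> u \<in> Defs.shift -` B \<inter> space UnifM" .
    qed
    then have "h \<omega> = emeasure UnifM (Defs.shift -` B \<inter> space UnifM)" by (simp add: h_def)
    also have "\<dots> = emeasure (distr UnifM UnifM Defs.shift) B"
      by (rule emeasure_distr[OF meas_UnifM_shift Bs, symmetric])
    also have "\<dots> = h (Defs.shift \<omega>)" by (simp add: distr_UnifM_shift h_def B_def)
    finally show ?thesis ..
  qed
  have hmeas: "h \<in> borel_measurable \<mu>"
    unfolding h_def by (rule U.measurable_emeasure_Pair[OF IRs])
  define G where "G = {\<omega>\<in>space \<mu>. h \<omega> = 1}"
  have Gs: "G \<in> sets \<mu>"
  proof -
    have "G = h -` {1} \<inter> space \<mu>" unfolding G_def by auto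
    then show ?thesis using measurable_sets[OF hmeas, of "{1}"] by simp
  qed
  have Ginv: "Defs.shift -` G \<inter> space \<mu> = G"
    unfolding G_def using hinv measurable_space[OF shift_meas] by auto
  have G01: "measure \<mu> G = 0 \<or> measure \<mu> G = 1"
    using erg Gs Ginv unfolding ergodic_def by blast
  have "emeasure J IR = (\<integral>\<^sup>+\<omega>. h \<omega> \<partial>\<mu>)"
    unfolding jointP_def h_def by (rule U.emeasure_pair_measure_alt[OF IRs])
  also have "\<dots> = (\<integral>\<^sup>+\<omega>. indicator G \<omega> \<partial>\<mu>)"
  proof (rule nn_integral_cong)
    fix \<omega> assume "\<omega> \<in> space \<mu>"
    then show "h \<omega> = indicator G \<omega>" using h01[of \<omega>] by (auto simp: G_def indicator_def)
  qed
  also have "\<dots> = emeasure \<mu> G" by (rule nn_integral_indicator[OF Gs])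
  finally have IRG: "emeasure J IR = emeasure \<mu> G" .
  have "0 < measure J IR" using pos IR_ge by linarith
  then have "measure \<mu> G \<noteq> 0" using IRG PJ.emeasure_eq_measure M.emeasure_eq_measure by auto
  then have "measure \<mu> G = 1" using G01 by blast
  then show ?thesis using IRG PJ.emeasure_eq_measure M.emeasure_eq_measure by simp
qed

lemma main:
  assumes erg: "ergodic \<mu>" and nd: "nondeg \<mu>" and pos: "measure J (Rset 0) > 0"
  shows "emeasure J (Lset 0) = 0"
proof -
  interpret PJ: prob_space J by (rule prob_J)
  have a: "AE p in J. \<forall>x. nondeg_seq (arrow p x)" using nd unfolding nondeg_def .
  have b: "AE p in J. p \<in> IR" by (rule PJ.AE_prob_1[OF IR_one[OF erg pos]])
  have c: "AE p in J. \<forall>m. p \<in> E 0 \<longrightarrow> p \<in> E m" by (rule E_AE)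
  have AEL: "AE p in J. p \<notin> Lset 0"
    using a b c
  proof eventually_elim
    case (elim p)
    show "p \<notin> Lset 0"
    proof
      assume L0: "p \<in> Lset 0"
      then have "p \<in> E 0" unfolding Lset_def E_def by (auto intro: exI[of _ 0])
      then have allE: "\<And>m. p \<in> E m" using elim by blast
      obtain n0 where n0: "Rev (arrow p) (int n0)" using elim(2) unfolding IR_def by blast
      obtain n1 where n1: "n0 \<le> n1" "Lev (arrow p) (int n1)" using allE[of n0] unfolding E_def by blast
      show False
        by (rule no_R_left_of_L[of "arrow p" "int n0" "int n1"])
           (use elim(1) n0 n1 in \<open>auto simp: Rev_def Lev_def\<close>)
    qed
  qed
  have eq: "{p\<in>space J. \<not> p \<notin> Lset 0} = Lset 0" unfolding Lset_def by blast
  show ?thesis using AE_iff_measurable[OF sets_Lset eq] AEL by (rule iffD1)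
qed

end

theorem proposition4p1:
  fixes \<mu> :: "(int \<times> nat \<Rightarrow> real) measure"
  assumes "prob_space \<mu>"
    and "sets \<mu> = sets OmegaM"
    and "stationary \<mu>"
    and "ergodic \<mu>"
    and "elliptic \<mu>"
    and "nondeg \<mu>"
    and "measure (jointP \<mu>) (Splus \<mu> 1) > 0"
  shows "Sminus \<mu> 1 \<in> sets (jointP \<mu>) \<and> measure (jointP \<mu>) (Sminus \<mu> 1) = 0"
proof -
  interpret setting \<mu> using assms(1-3) by (rule setting.intro)
  have SP: "Splus \<mu> 1 = Rset 0"
    unfolding Splus_def Rset_def Rev_def Zplus_ZR by simp
  have SM: "Sminus \<mu> 1 = Lset 0"
    unfolding Sminus_def Lset_def Lev_def Zminus_ZL by simp
  have "emeasure J (Lset 0) = 0" by (rule main[OF assms(4) assms(6)]) (use assms(7) SP in simp)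
  then show ?thesis unfolding SM using sets_Lset measure_def by (simp add: measure_def)
qed

end
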